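(* Let $J$ be a finite set, and let $Y$ and $X_j$ ($j\in J$) be Banach lattices on a measure space $(\Omega,\Sigma,\mu)$. Then for every $\theta\in(0,1)$, \[\bigoplus_{j\in J}\big(X_j^{1-\theta}Y^\theta\big)=\Big(\bigoplus_{j\in J}X_j\Big)^{1-\theta}Y^\theta\] as sets, and both inclusion maps $\bigoplus_{j\in J}(X_j^{1-\theta}Y^\theta)\hookrightarrow(\bigoplus_{j\in J}X_j)^{1-\theta}Y^\theta$ and $(\bigoplus_{j\in J}X_j)^{1-\theta}Y^\theta\hookrightarrow\bigoplus_{j\in J}(X_j^{1-\theta}Y^\theta)$ have norm at most $\operatorname{card}J$.
   Context: For a finite family of Banach spaces $Z_j$ contained in a common linear space, $\bigoplus_{j\in J}Z_j$ denotes $\bigcap_j Z_j$ with the norm $\|x\|=\sum_{j\in J}\|x\|_{Z_j}$. For Banach lattices $X_0,X_1$ on $(\Omega,\Sigma,\mu)$ and $\theta\in(0,1)$, the Calderón product $X_0^{1-\theta}X_1^\theta$ is the space of measurable $x$ such that $|x|\le\lambda|x_0|^{1-\theta}|x_1|^\theta$ $\mu$-a.e. for some $\lambda>0$ and some $x_i\in X_i$ with $\|x_i\|_{X_i}\le1$; its norm is the infimum of such $\lambda$. *)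

theory Defs
  imports "HOL-Analysis.Analysis"
begin

text \<open>A (real) Banach lattice on the measure space M (a Banach function lattice / Koethe
  space): a set X of real-valued measurable functions on M (elements identified up to
  mu-a.e. equality through the norm), together with a norm N, which is a linear space,
  is solid (an ideal: |y| <= |x| a.e. with x in X forces y in X and N y <= N x),
  is normed (N x = 0 iff x = 0 a.e.), and is complete.\<close>
definition banach_lattice ::
  "'a measure \<Rightarrow> ('a \<Rightarrow> real) set \<Rightarrow> (('a \<Rightarrow> real) \<Rightarrow> real) \<Rightarrow> bool" where
  "banach_lattice M X N \<longleftrightarrow>
     X \<subseteq> borel_measurable M \<and>
     (\<lambda>_. 0) \<in> X \<and>
     (\<forall>x\<in>X. \<forall>y\<in>X. (\<lambda>\<omega>. x \<omega> + y \<omega>) \<in> X) \<and>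
     (\<forall>x\<in>X. \<forall>c::real. (\<lambda>\<omega>. c * x \<omega>) \<in> X) \<and>
     (\<forall>x\<in>X. \<forall>y\<in>borel_measurable M.
        (AE \<omega> in M. \<bar>y \<omega>\<bar> \<le> \<bar>x \<omega>\<bar>) \<longrightarrow> y \<in> X \<and> N y \<le> N x) \<and>
     (\<forall>x\<in>X. \<forall>y\<in>X. N (\<lambda>\<omega>. x \<omega> + y \<omega>) \<le> N x + N y) \<and>
     (\<forall>x\<in>X. \<forall>c::real. N (\<lambda>\<omega>. c * x \<omega>) = \<bar>c\<bar> * N x) \<and>
     (\<forall>x\<in>X. N x = 0 \<longleftrightarrow> (AE \<omega> in M. x \<omega> = 0)) \<and>
     (\<forall>s::nat \<Rightarrow> 'a \<Rightarrow> real. (\<forall>n. s n \<in> X) \<and>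
        (\<forall>e>0. \<exists>K. \<forall>m\<ge>K. \<forall>n\<ge>K. N (\<lambda>\<omega>. s m \<omega> - s n \<omega>) < e) \<longrightarrow>
        (\<exists>x\<in>X. (\<lambda>n. N (\<lambda>\<omega>. s n \<omega> - x \<omega>)) \<longlonglongrightarrow> 0))"

text \<open>Finite intersection sum: the set \<Inter>_j X_j (inside the common space of measurable
  functions) with norm \<Sum>_j N_j.\<close>
definition dsum_set ::
  "'a measure \<Rightarrow> 'j set \<Rightarrow> ('j \<Rightarrow> ('a \<Rightarrow> real) set) \<Rightarrow> ('a \<Rightarrow> real) set" where
  "dsum_set M J X = {x \<in> borel_measurable M. \<forall>j\<in>J. x \<in> X j}"

definition dsum_norm ::
  "'j set \<Rightarrow> ('j \<Rightarrow> ('a \<Rightarrow> real) \<Rightarrow> real) \<Rightarrow> ('a \<Rightarrow> real) \<Rightarrow> real" where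
  "dsum_norm J N x = (\<Sum>j\<in>J. N j x)"

definition calderon_witness ::
  "'a measure \<Rightarrow> ('a \<Rightarrow> real) set \<Rightarrow> (('a \<Rightarrow> real) \<Rightarrow> real) \<Rightarrow>
   ('a \<Rightarrow> real) set \<Rightarrow> (('a \<Rightarrow> real) \<Rightarrow> real) \<Rightarrow> real \<Rightarrow> ('a \<Rightarrow> real) \<Rightarrow> real \<Rightarrow> bool" where
  "calderon_witness M X0 N0 X1 N1 \<theta> x c \<longleftrightarrow> c > 0 \<and>
     (\<exists>x0\<in>X0. \<exists>x1\<in>X1. N0 x0 \<le> 1 \<and> N1 x1 \<le> 1 \<and>
        (AE \<omega> in M. \<bar>x \<omega>\<bar> \<le> c * (\<bar>x0 \<omega>\<bar> powr (1 - \<theta>) * \<bar>x1 \<omega>\<bar> powr \<theta>)))"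

definition calderon_set ::
  "'a measure \<Rightarrow> ('a \<Rightarrow> real) set \<Rightarrow> (('a \<Rightarrow> real) \<Rightarrow> real) \<Rightarrow>
   ('a \<Rightarrow> real) set \<Rightarrow> (('a \<Rightarrow> real) \<Rightarrow> real) \<Rightarrow> real \<Rightarrow> ('a \<Rightarrow> real) set" where
  "calderon_set M X0 N0 X1 N1 \<theta> =
     {x \<in> borel_measurable M. \<exists>c. calderon_witness M X0 N0 X1 N1 \<theta> x c}"

definition calderon_norm ::
  "'a measure \<Rightarrow> ('a \<Rightarrow> real) set \<Rightarrow> (('a \<Rightarrow> real) \<Rightarrow> real) \<Rightarrow>
   ('a \<Rightarrow> real) set \<Rightarrow> (('a \<Rightarrow> real) \<Rightarrow> real) \<Rightarrow> real \<Rightarrow> ('a \<Rightarrow> real) \<Rightarrow> real" where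
  "calderon_norm M X0 N0 X1 N1 \<theta> x = Inf {c. calderon_witness M X0 N0 X1 N1 \<theta> x c}"

end

theory Submission imports Defs begin

lemma BL_solid:
  assumes "banach_lattice M X N" "x \<in> X" "y \<in> borel_measurable M"
    "AE \<omega> in M. \<bar>y \<omega>\<bar> \<le> \<bar>x \<omega>\<bar>"
  shows "y \<in> X \<and> N y \<le> N x"
  using assms unfolding banach_lattice_def by blast

lemma BL_meas: "banach_lattice M X N \<Longrightarrow> x \<in> X \<Longrightarrow> x \<in> borel_measurable M"
  unfolding banach_lattice_def by blast

lemma BL_scale:
  assumes "banach_lattice M X N" "x \<in> X"
  shows "(\<lambda>\<omega>. c * x \<omega>) \<in> X \<and> N (\<lambda>\<omega>. c * x \<omega>) = \<bar>c\<bar> * N x"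
  using assms unfolding banach_lattice_def by blast

lemma BL_add:
  assumes "banach_lattice M X N" "u \<in> X" "v \<in> X"
  shows "(\<lambda>\<omega>. u \<omega> + v \<omega>) \<in> X \<and> N (\<lambda>\<omega>. u \<omega> + v \<omega>) \<le> N u + N v"
proof -
  have a: "\<forall>x\<in>X. \<forall>y\<in>X. (\<lambda>\<omega>. x \<omega> + y \<omega>) \<in> X" and
    b: "\<forall>x\<in>X. \<forall>y\<in>X. N (\<lambda>\<omega>. x \<omega> + y \<omega>) \<le> N x + N y"
    using assms(1) unfolding banach_lattice_def by blast+
  show ?thesis using bspec[OF bspec[OF a assms(2)] assms(3)] bspec[OF bspec[OF b assms(2)] assms(3)]
    by simp
qed

lemma BL_zero:
  assumes "banach_lattice M X N"
  shows "(\<lambda>_. 0) \<in> X \<and> N (\<lambda>_. 0) = 0"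
proof -
  have z: "(\<lambda>_. 0::real) \<in> X" using assms unfolding banach_lattice_def by blast
  from BL_scale[OF assms z, of 0] show ?thesis using z by simp
qed

lemma BL_nonneg:
  assumes "banach_lattice M X N" "x \<in> X"
  shows "0 \<le> N x"
proof -
  have m: "(\<lambda>\<omega>. (-1) * x \<omega>) \<in> X" and e: "N (\<lambda>\<omega>. (-1) * x \<omega>) = N x"
    using BL_scale[OF assms, of "-1"] by auto
  have "N (\<lambda>\<omega>. x \<omega> + (-1) * x \<omega>) \<le> N x + N (\<lambda>\<omega>. (-1) * x \<omega>)"
    using BL_add[OF assms(1,2) m] by simp
  moreover have "(\<lambda>\<omega>. x \<omega> + (-1) * x \<omega>) = (\<lambda>_. 0)" by auto
  ultimately show ?thesis using e BL_zero[OF assms(1)] by simp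
qed

lemma BL_abs:
  assumes "banach_lattice M X N" "x \<in> X"
  shows "(\<lambda>\<omega>. \<bar>x \<omega>\<bar>) \<in> X \<and> N (\<lambda>\<omega>. \<bar>x \<omega>\<bar>) \<le> N x"
  apply (rule BL_solid[OF assms])
  using BL_meas[OF assms] by auto

lemma BL_sum:
  assumes "banach_lattice M X N" "finite I" "\<And>i. i \<in> I \<Longrightarrow> f i \<in> X"
  shows "(\<lambda>\<omega>. \<Sum>i\<in>I. f i \<omega>) \<in> X \<and> N (\<lambda>\<omega>. \<Sum>i\<in>I. f i \<omega>) \<le> (\<Sum>i\<in>I. N (f i))"
  using assms(2,3)
proof (induction I rule: finite_induct)
  case empty
  then show ?case using BL_zero[OF assms(1)] by simp
next
  case (insert i I)
  have fi: "f i \<in> X" using insert by auto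
  have IH: "(\<lambda>\<omega>. \<Sum>i\<in>I. f i \<omega>) \<in> X" "N (\<lambda>\<omega>. \<Sum>i\<in>I. f i \<omega>) \<le> (\<Sum>i\<in>I. N (f i))"
    using insert by auto
  have "(\<lambda>\<omega>. f i \<omega> + (\<Sum>i\<in>I. f i \<omega>)) \<in> X"
    "N (\<lambda>\<omega>. f i \<omega> + (\<Sum>i\<in>I. f i \<omega>)) \<le> N (f i) + N (\<lambda>\<omega>. \<Sum>i\<in>I. f i \<omega>)"
    using BL_add[OF assms(1) fi IH(1)] by auto
  then show ?case using insert IH(2) by simp
qed

lemma key_real:
  fixes c S n a b yv v \<theta> :: real
  assumes "0 < c" "c \<le> S" "1 \<le> n" "0 \<le> a" "0 \<le> b" "b / n \<le> yv"
    "v \<le> c * (a powr (1 - \<theta>) * b powr \<theta>)" "0 < \<theta>" "\<theta> < 1"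
  shows "v \<le> n * S * ((c / S * a) powr (1 - \<theta>) * yv powr \<theta>)"
proof -
  have S0: "0 < S" using assms by linarith
  have n0: "0 < n" using assms by linarith
  have y1: "(b / n) powr \<theta> \<le> yv powr \<theta>"
    using assms by (intro powr_mono2) auto
  have y2: "(b / n) powr \<theta> = b powr \<theta> / n powr \<theta>"
    using assms n0 by (simp add: powr_divide)
  have x1: "(c / S * a) powr (1 - \<theta>) = (c / S) powr (1 - \<theta>) * a powr (1 - \<theta>)"
    using assms S0 by (simp add: powr_mult del: times_divide_eq_left)
  have x2: "(c / S) powr (1 - \<theta>) = c powr (1 - \<theta>) / S powr (1 - \<theta>)"
    using assms S0 by (simp add: powr_divide)
  have K: "c \<le> n * S * (c powr (1 - \<theta>) / S powr (1 - \<theta>)) / n powr \<theta>"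
  proof -
    have "n * S * (c powr (1 - \<theta>) / S powr (1 - \<theta>)) / n powr \<theta>
        = n powr (1 - \<theta>) * S powr \<theta> * c powr (1 - \<theta>)"
      using S0 n0 by (simp add: powr_diff field_simps powr_add[symmetric])
    also have "\<dots> \<ge> 1 * c powr \<theta> * c powr (1 - \<theta>)"
      apply (intro mult_right_mono mult_mono)
      using assms by (auto intro: ge_one_powr_ge_zero powr_mono2)
    also have "1 * c powr \<theta> * c powr (1 - \<theta>) = c"
      using assms by (simp add: powr_add[symmetric])
    finally show ?thesis by simp
  qed
  have "v \<le> c * (a powr (1 - \<theta>) * b powr \<theta>)" by fact
  also have "\<dots> \<le> (n * S * (c powr (1 - \<theta>) / S powr (1 - \<theta>)) / n powr \<theta>) * (a powr (1 - \<theta>) * b powr \<theta>)"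
    by (intro mult_right_mono K) auto
  also have "\<dots> = n * S * ((c / S) powr (1 - \<theta>) * a powr (1 - \<theta>) * (b / n) powr \<theta>)"
    using x2 y2 by simp
  also have "\<dots> \<le> n * S * ((c / S) powr (1 - \<theta>) * a powr (1 - \<theta>) * yv powr \<theta>)"
    using y1 S0 n0 by (intro mult_left_mono) auto
  finally show ?thesis using x1 by (simp add: mult.assoc)
qed


lemma dir2:
  assumes "calderon_witness M (dsum_set M J X) (dsum_norm J NX) Y NY \<theta> x c" "j \<in> J" "finite J"
    "\<And>j. j \<in> J \<Longrightarrow> banach_lattice M (X j) (NX j)"
  shows "calderon_witness M (X j) (NX j) Y NY \<theta> x c"
proof -
  obtain x0 x1 where x0: "x0 \<in> dsum_set M J X" and x1: "x1 \<in> Y" "NY x1 \<le> 1"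
    and n0: "dsum_norm J NX x0 \<le> 1" and ae: "AE \<omega> in M. \<bar>x \<omega>\<bar> \<le> c * (\<bar>x0 \<omega>\<bar> powr (1 - \<theta>) * \<bar>x1 \<omega>\<bar> powr \<theta>)"
    and c: "c > 0"
    using assms(1) unfolding calderon_witness_def by blast
  have xj: "x0 \<in> X j" using x0 assms(2) unfolding dsum_set_def by auto
  have "NX j x0 \<le> (\<Sum>i\<in>J. NX i x0)"
    apply (rule member_le_sum[OF assms(2) _ assms(3)])
    using x0 BL_nonneg[OF assms(4)] unfolding dsum_set_def by auto
  then have "NX j x0 \<le> 1" using n0 unfolding dsum_norm_def by simp
  then show ?thesis unfolding calderon_witness_def using c xj x1 ae by blast
qed

lemma dir1:
  assumes fin: "finite J" and ne: "J \<noteq> {}"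
    and BX: "\<And>j. j \<in> J \<Longrightarrow> banach_lattice M (X j) (NX j)"
    and BY: "banach_lattice M Y NY"
    and th: "0 < \<theta>" "\<theta> < 1"
    and W: "\<forall>j\<in>J. calderon_witness M (X j) (NX j) Y NY \<theta> x (cc j)"
  shows "calderon_witness M (dsum_set M J X) (dsum_norm J NX) Y NY \<theta> x (real (card J) * sum cc J)"
proof -
  have "\<forall>j\<in>J. \<exists>p. cc j > 0 \<and> fst p \<in> X j \<and> snd p \<in> Y \<and> NX j (fst p) \<le> 1 \<and> NY (snd p) \<le> 1 \<and>
        (AE \<omega> in M. \<bar>x \<omega>\<bar> \<le> cc j * (\<bar>fst p \<omega>\<bar> powr (1 - \<theta>) * \<bar>snd p \<omega>\<bar> powr \<theta>))"
    using W unfolding calderon_witness_def by fastforce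
  from bchoice[OF this] obtain p where p: "\<forall>j\<in>J. cc j > 0 \<and> fst (p j) \<in> X j \<and> snd (p j) \<in> Y \<and> NX j (fst (p j)) \<le> 1 \<and> NY (snd (p j)) \<le> 1 \<and>
        (AE \<omega> in M. \<bar>x \<omega>\<bar> \<le> cc j * (\<bar>fst (p j) \<omega>\<bar> powr (1 - \<theta>) * \<bar>snd (p j) \<omega>\<bar> powr \<theta>))"
    by blast
  define xs where "xs j = fst (p j)" for j
  define ys where "ys j = snd (p j)" for j
  have cpos: "\<And>j. j \<in> J \<Longrightarrow> cc j > 0" using p by blast
  have xsX: "\<And>j. j \<in> J \<Longrightarrow> xs j \<in> X j" using p by (simp add: xs_def)
  have ysY: "\<And>j. j \<in> J \<Longrightarrow> ys j \<in> Y" using p by (simp add: ys_def)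
  have xsN: "\<And>j. j \<in> J \<Longrightarrow> NX j (xs j) \<le> 1" using p by (simp add: xs_def)
  have ysN: "\<And>j. j \<in> J \<Longrightarrow> NY (ys j) \<le> 1" using p by (simp add: ys_def)
  have aej: "\<forall>j\<in>J. AE \<omega> in M. \<bar>x \<omega>\<bar> \<le> cc j * (\<bar>xs j \<omega>\<bar> powr (1 - \<theta>) * \<bar>ys j \<omega>\<bar> powr \<theta>)"
    using p by (simp add: xs_def ys_def)
  define n where "n = real (card J)"
  define S where "S = sum cc J"
  define K where "K j = cc j / S" for j
  define x0 where "x0 \<omega> = Min ((\<lambda>j. K j * \<bar>xs j \<omega>\<bar>) ` J)" for \<omega>
  define y where "y \<omega> = (1 / n) * (\<Sum>j\<in>J. \<bar>ys j \<omega>\<bar>)" for \<omega>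
  have n1: "1 \<le> n" using fin ne n_def by (simp add: Suc_leI card_gt_0_iff)
  have S0: "0 < S" unfolding S_def using cpos fin ne by (intro sum_pos) auto
  have K0: "\<And>j. j \<in> J \<Longrightarrow> 0 < K j" using cpos S0 K_def by simp
  have absY: "\<And>j. j \<in> J \<Longrightarrow> (\<lambda>\<omega>. \<bar>ys j \<omega>\<bar>) \<in> Y \<and> NY (\<lambda>\<omega>. \<bar>ys j \<omega>\<bar>) \<le> 1"
    using BL_abs[OF BY ysY] ysN by fastforce
  have sY: "(\<lambda>\<omega>. \<Sum>j\<in>J. \<bar>ys j \<omega>\<bar>) \<in> Y" "NY (\<lambda>\<omega>. \<Sum>j\<in>J. \<bar>ys j \<omega>\<bar>) \<le> (\<Sum>j\<in>J. NY (\<lambda>\<omega>. \<bar>ys j \<omega>\<bar>))"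
    using BL_sum[OF BY fin, of "\<lambda>j \<omega>. \<bar>ys j \<omega>\<bar>"] absY by auto
  have "(\<Sum>j\<in>J. NY (\<lambda>\<omega>. \<bar>ys j \<omega>\<bar>)) \<le> (\<Sum>j\<in>J. 1)"
    using absY by (intro sum_mono) auto
  then have sN: "NY (\<lambda>\<omega>. \<Sum>j\<in>J. \<bar>ys j \<omega>\<bar>) \<le> n" using sY(2) n_def by simp
  have yY: "y \<in> Y" and yN: "NY y \<le> 1"
  proof -
    have e: "y = (\<lambda>\<omega>. (1 / n) * (\<lambda>\<omega>. \<Sum>j\<in>J. \<bar>ys j \<omega>\<bar>) \<omega>)" unfolding y_def by simp
    have sc: "y \<in> Y \<and> NY y = \<bar>1 / n\<bar> * NY (\<lambda>\<omega>. \<Sum>j\<in>J. \<bar>ys j \<omega>\<bar>)"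
      unfolding e by (rule BL_scale[OF BY sY(1)])
    then show "y \<in> Y" by simp
    have "\<bar>1 / n\<bar> * NY (\<lambda>\<omega>. \<Sum>j\<in>J. \<bar>ys j \<omega>\<bar>) \<le> (1 / n) * n"
    proof -
      have "\<bar>1 / n\<bar> = 1 / n" using n1 by simp
      then show ?thesis using n1 sN by (simp add: mult_left_mono)
    qed
    then show "NY y \<le> 1" using sc n1 by simp
  qed
  have xsm: "\<And>j. j \<in> J \<Longrightarrow> xs j \<in> borel_measurable M" using BL_meas[OF BX xsX] by blast
  have x0m: "x0 \<in> borel_measurable M"
    unfolding x0_def using fin xsm by measurable
  have x0le: "\<And>j \<omega>. j \<in> J \<Longrightarrow> x0 \<omega> \<le> K j * \<bar>xs j \<omega>\<bar>"
    unfolding x0_def using fin by (intro Min_le) auto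
  have x0ex: "\<And>\<omega>. \<exists>j\<in>J. x0 \<omega> = K j * \<bar>xs j \<omega>\<bar>"
  proof -
    fix \<omega>
    have "x0 \<omega> \<in> (\<lambda>j. K j * \<bar>xs j \<omega>\<bar>) ` J" unfolding x0_def using fin ne by (intro Min_in) auto
    then show "\<exists>j\<in>J. x0 \<omega> = K j * \<bar>xs j \<omega>\<bar>" by auto
  qed
  have x0nn: "0 \<le> x0 \<omega>" for \<omega>
  proof -
    obtain j where "j \<in> J" "x0 \<omega> = K j * \<bar>xs j \<omega>\<bar>" using x0ex by blast
    then show ?thesis using K0[of j] by simp
  qed
  have x0X: "\<And>j. j \<in> J \<Longrightarrow> x0 \<in> X j \<and> NX j x0 \<le> K j"
  proof -
    fix j assume j: "j \<in> J"
    have a: "(\<lambda>\<omega>. \<bar>xs j \<omega>\<bar>) \<in> X j \<and> NX j (\<lambda>\<omega>. \<bar>xs j \<omega>\<bar>) \<le> NX j (xs j)"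
      by (rule BL_abs[OF BX[OF j] xsX[OF j]])
    have b: "(\<lambda>\<omega>. K j * (\<lambda>\<omega>. \<bar>xs j \<omega>\<bar>) \<omega>) \<in> X j \<and>
        NX j (\<lambda>\<omega>. K j * (\<lambda>\<omega>. \<bar>xs j \<omega>\<bar>) \<omega>) = \<bar>K j\<bar> * NX j (\<lambda>\<omega>. \<bar>xs j \<omega>\<bar>)"
      using a by (intro BL_scale[OF BX[OF j]]) auto
    have c: "x0 \<in> X j \<and> NX j x0 \<le> NX j (\<lambda>\<omega>. K j * (\<lambda>\<omega>. \<bar>xs j \<omega>\<bar>) \<omega>)"
      apply (rule BL_solid[OF BX[OF j] conjunct1[OF b] x0m])
      using x0le[OF j] x0nn K0[OF j] by (auto intro!: AE_I2)
    have "\<bar>K j\<bar> * NX j (\<lambda>\<omega>. \<bar>xs j \<omega>\<bar>) \<le> K j * 1"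
      using K0[OF j] a xsN[OF j] by (simp add: mult_left_le)
    then show "x0 \<in> X j \<and> NX j x0 \<le> K j" using b c by simp
  qed
  have x0D: "x0 \<in> dsum_set M J X" unfolding dsum_set_def using x0m x0X by auto
  have "dsum_norm J NX x0 \<le> (\<Sum>j\<in>J. K j)" unfolding dsum_norm_def using x0X by (intro sum_mono) auto
  also have "(\<Sum>j\<in>J. K j) = 1" unfolding K_def S_def using S0 S_def by (simp add: sum_divide_distrib[symmetric])
  finally have x0N: "dsum_norm J NX x0 \<le> 1" .
  have ae: "AE \<omega> in M. \<forall>j\<in>J. \<bar>x \<omega>\<bar> \<le> cc j * (\<bar>xs j \<omega>\<bar> powr (1 - \<theta>) * \<bar>ys j \<omega>\<bar> powr \<theta>)"
    by (rule eventually_ball_finite[OF fin aej])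
  have ae2: "AE \<omega> in M. \<bar>x \<omega>\<bar> \<le> (n * S) * (\<bar>x0 \<omega>\<bar> powr (1 - \<theta>) * \<bar>y \<omega>\<bar> powr \<theta>)"
  proof (rule eventually_mono[OF ae], goal_cases)
    case (1 \<omega>)
    obtain j where j: "j \<in> J" and e: "x0 \<omega> = K j * \<bar>xs j \<omega>\<bar>" using x0ex by blast
    have cS: "cc j \<le> S" unfolding S_def using cpos by (intro member_le_sum[OF j _ fin]) (auto simp: less_imp_le)
    have "\<bar>ys j \<omega>\<bar> \<le> (\<Sum>j\<in>J. \<bar>ys j \<omega>\<bar>)" by (intro member_le_sum[OF j _ fin]) auto
    then have yb: "\<bar>ys j \<omega>\<bar> / n \<le> y \<omega>" unfolding y_def using n1 by (simp add: divide_right_mono)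
    have y0: "0 \<le> y \<omega>" unfolding y_def using n1 by (auto intro: sum_nonneg)
    have "\<bar>x \<omega>\<bar> \<le> n * S * ((cc j / S * \<bar>xs j \<omega>\<bar>) powr (1 - \<theta>) * y \<omega> powr \<theta>)"
      by (rule key_real[OF cpos[OF j] cS n1 _ _ yb _ th]) (use 1 j in auto)
    moreover have "\<bar>x0 \<omega>\<bar> = cc j / S * \<bar>xs j \<omega>\<bar>" using e K_def x0nn[of \<omega>] abs_of_nonneg[OF x0nn[of \<omega>]] by presburger
    moreover have "\<bar>y \<omega>\<bar> = y \<omega>" using y0 by simp
    ultimately show ?case by (simp only:)
  qed
  have cp: "0 < n * S" using n1 S0 by simp
  show ?thesis unfolding calderon_witness_def n_def[symmetric] S_def[symmetric]
    using cp x0D yY yN x0N ae2 by blast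
qed

theorem lemma4p9:
  fixes M :: "'a measure" and J :: "'j set"
    and X :: "'j \<Rightarrow> ('a \<Rightarrow> real) set" and NX :: "'j \<Rightarrow> ('a \<Rightarrow> real) \<Rightarrow> real"
    and Y :: "('a \<Rightarrow> real) set" and NY :: "('a \<Rightarrow> real) \<Rightarrow> real"
    and \<theta> :: real
  assumes "finite J" and "J \<noteq> {}"
    and "\<And>j. j \<in> J \<Longrightarrow> banach_lattice M (X j) (NX j)"
    and "banach_lattice M Y NY"
    and "0 < \<theta>" and "\<theta> < 1"
  shows "dsum_set M J (\<lambda>j. calderon_set M (X j) (NX j) Y NY \<theta>)
           = calderon_set M (dsum_set M J X) (dsum_norm J NX) Y NY \<theta>
       \<and> (\<forall>x \<in> dsum_set M J (\<lambda>j. calderon_set M (X j) (NX j) Y NY \<theta>).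
            calderon_norm M (dsum_set M J X) (dsum_norm J NX) Y NY \<theta> x
              \<le> real (card J) * dsum_norm J (\<lambda>j. calderon_norm M (X j) (NX j) Y NY \<theta>) x)
       \<and> (\<forall>x \<in> calderon_set M (dsum_set M J X) (dsum_norm J NX) Y NY \<theta>.
            dsum_norm J (\<lambda>j. calderon_norm M (X j) (NX j) Y NY \<theta>) x
              \<le> real (card J) * calderon_norm M (dsum_set M J X) (dsum_norm J NX) Y NY \<theta> x)"
proof -
  note fin = assms(1) and ne = assms(2) and BX = assms(3) and BY = assms(4) and th = assms(5,6)
  define W where "W j = calderon_witness M (X j) (NX j) Y NY \<theta>" for j
  define WD where "WD = calderon_witness M (dsum_set M J X) (dsum_norm J NX) Y NY \<theta>"
  have bddW: "bdd_below {c. W j x c}" for j x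
    by (rule bdd_belowI[of _ 0]) (auto simp: W_def calderon_witness_def)
  have bddWD: "bdd_below {c. WD x c}" for x
    by (rule bdd_belowI[of _ 0]) (auto simp: WD_def calderon_witness_def)
  have d1: "WD x (real (card J) * sum cc J)" if "\<forall>j\<in>J. W j x (cc j)" for x cc
    unfolding WD_def by (rule dir1) (use fin ne BX BY th that in \<open>auto simp: W_def\<close>)
  have d2: "W j x c" if "WD x c" "j \<in> J" for x c j
    unfolding W_def by (rule dir2) (use that fin BX in \<open>auto simp: WD_def\<close>)
  have E: "dsum_set M J (\<lambda>j. calderon_set M (X j) (NX j) Y NY \<theta>)
           = calderon_set M (dsum_set M J X) (dsum_norm J NX) Y NY \<theta>"
  proof (intro set_eqI iffI)
    fix x assume "x \<in> dsum_set M J (\<lambda>j. calderon_set M (X j) (NX j) Y NY \<theta>)"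
    then have xm: "x \<in> borel_measurable M" and "\<forall>j\<in>J. \<exists>c. W j x c"
      unfolding dsum_set_def calderon_set_def W_def by auto
    then obtain cc where "\<forall>j\<in>J. W j x (cc j)" by metis
    then show "x \<in> calderon_set M (dsum_set M J X) (dsum_norm J NX) Y NY \<theta>"
      using d1 xm unfolding calderon_set_def WD_def by blast
  next
    fix x assume "x \<in> calderon_set M (dsum_set M J X) (dsum_norm J NX) Y NY \<theta>"
    then obtain c where xm: "x \<in> borel_measurable M" and c: "WD x c"
      unfolding calderon_set_def WD_def by blast
    then show "x \<in> dsum_set M J (\<lambda>j. calderon_set M (X j) (NX j) Y NY \<theta>)"
      using d2[OF c] unfolding dsum_set_def calderon_set_def W_def by blast
  qed
  have n1: "1 \<le> real (card J)" using fin ne by (simp add: Suc_leI card_gt_0_iff)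
  have P2: "calderon_norm M (dsum_set M J X) (dsum_norm J NX) Y NY \<theta> x
              \<le> real (card J) * dsum_norm J (\<lambda>j. calderon_norm M (X j) (NX j) Y NY \<theta>) x"
    if x: "x \<in> dsum_set M J (\<lambda>j. calderon_set M (X j) (NX j) Y NY \<theta>)" for x
  proof -
    define n where "n = real (card J)"
    have ex: "\<forall>j\<in>J. \<exists>c. W j x c"
      using x unfolding dsum_set_def calderon_set_def W_def by auto
    show ?thesis
      unfolding calderon_norm_def dsum_norm_def WD_def[symmetric] W_def[symmetric] n_def[symmetric]
    proof (rule field_le_epsilon)
      fix e :: real assume e: "0 < e"
      define d where "d = e / (n * n)"
      have d0: "0 < d" using e n1 n_def d_def by simp
      have "\<forall>j\<in>J. \<exists>c. W j x c \<and> c < Inf {c. W j x c} + d"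
      proof
        fix j assume j: "j \<in> J"
        have "{c. W j x c} \<noteq> {}" using ex j by auto
        from cInf_lessD[OF this, of "Inf {c. W j x c} + d"] d0 show "\<exists>c. W j x c \<and> c < Inf {c. W j x c} + d"
          by auto
      qed
      then obtain cc where cc: "\<forall>j\<in>J. W j x (cc j) \<and> cc j < Inf {c. W j x c} + d" by metis
      have "Inf {c. WD x c} \<le> n * sum cc J"
        using d1[of x cc] cc n_def by (intro cInf_lower bddWD) auto
      also have "\<dots> \<le> n * (\<Sum>j\<in>J. Inf {c. W j x c} + d)"
        using cc n1 n_def by (intro mult_left_mono sum_mono) (auto simp: less_imp_le)
      also have "\<dots> = n * (\<Sum>j\<in>J. Inf {c. W j x c}) + e"
        using n1 n_def d_def by (simp add: sum.distrib algebra_simps)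
      finally show "Inf {c. WD x c} \<le> n * (\<Sum>j\<in>J. Inf {c. W j x c}) + e" .
    qed
  qed
  have P3: "dsum_norm J (\<lambda>j. calderon_norm M (X j) (NX j) Y NY \<theta>) x
              \<le> real (card J) * calderon_norm M (dsum_set M J X) (dsum_norm J NX) Y NY \<theta> x"
    if x: "x \<in> calderon_set M (dsum_set M J X) (dsum_norm J NX) Y NY \<theta>" for x
  proof -
    define n where "n = real (card J)"
    have ne2: "{c. WD x c} \<noteq> {}" using x unfolding calderon_set_def WD_def by auto
    have "(\<Sum>j\<in>J. Inf {c. W j x c}) / n \<le> Inf {c. WD x c}"
    proof (rule cInf_greatest[OF ne2])
      fix c assume c: "c \<in> {c. WD x c}"
      have "(\<Sum>j\<in>J. Inf {c. W j x c}) \<le> (\<Sum>j\<in>J. c)"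
        using c d2 by (intro sum_mono cInf_lower bddW) auto
      then show "(\<Sum>j\<in>J. Inf {c. W j x c}) / n \<le> c"
        using n1 n_def by (simp add: divide_le_eq mult.commute)
    qed
    then show ?thesis
      unfolding calderon_norm_def dsum_norm_def WD_def[symmetric] W_def[symmetric] n_def[symmetric]
      using n1 n_def by (simp add: divide_le_eq mult.commute)
  qed
  show ?thesis using E P2 P3 by blast
qed

end
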